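(* The inquisitive disjunction $\vee$ is strongly undefinable in propositional dependence logic $\mathcal D$. Concretely: for every context $\varphi(a,b)$ of $\mathcal D$ and every pair of distinct propositional letters $p,q$ not occurring in $\varphi(a,b)$, letting $M_{pq}$ be the model with worlds $w_1,w_2,w_3$ in which $p$ is true exactly at $w_1,w_2$, $q$ is true exactly at $w_2,w_3$, and all other letters are false everywhere, we have $\varphi(=\!(p),=\!(q))\not\equiv_{M_{pq}}=\!(p)\vee=\!(q)$; in particular $\varphi(=\!(p),=\!(q))\not\equiv=\!(p)\vee=\!(q)$.
   Context: Formulas of $\mathcal D$: $\varphi::= p\mid\neg p\mid\bot\mid=\!(p_1,\dots,p_n;q)\mid\varphi\land\varphi\mid\varphi\otimes\varphi$ with $p,q,p_i$ propositional letters ($n\ge0$; for $n=0$ written $=\!(q)$). A context $\varphi(a,b)$ is a $\mathcal D$ formula in which the letters $a,b$ do not occur negated nor inside a dependence atom; $\varphi(\psi,\chi)$ replaces $a$ by $\psi$ and $b$ by $\chi$. A model is $M=(W,V)$, $V(w)$ the set of letters true at $w$. Support at $s\subseteq W$: $s\models p$ iff $p$ true at all $w\in s$; $s\models\neg p$ iff $p$ false at all $w\in s$; $s\models\bot$ iff $s=\emptyset$; $s\models\psi\land\chi$ iff both; $s\models\psi\otimes\chi$ iff $s=t_1\cup t_2$ with $t_1\models\psi$, $t_2\models\chi$; $s\models=\!(p_1,\dots,p_n;q)$ iff any two worlds of $s$ agreeing on all $p_i$ agree on $q$; $s\models\psi\vee\chi$ iff $s\models\psi$ or $s\models\chi$ (inquisitive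 disjunction, not in $\mathcal D$). $\psi\equiv_M\chi$: same supporting states in $M$; $\psi\equiv\chi$: $\psi\equiv_M\chi$ for all $M$. Strong undefinability of a binary connective $\circ$ means: there are formulas $\psi,\chi$ and a model $M$ such that for every template (here: context) $\varphi(a,b)$, $\varphi(\psi',\chi')\not\equiv_{M'}\psi'\circ\chi'$, where $\psi',\chi'$ differ from $\psi,\chi$ only by a renaming of atoms and $M'$ is isomorphic to $M$. *)

theory Defs
  imports Main
begin

text \<open>Formulas of propositional dependence logic D over letters of type 'a.
  Dep ps q is the dependence atom =(p1,...,pn;q); Dep [] q is =(q).\<close>
datatype 'a dform =
    Atom 'a
  | NegAtom 'a
  | Bot
  | Dep "'a list" 'a
  | Conj "'a dform" "'a dform"
  | Tensor "'a dform" "'a dform"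

fun supp :: "('w \<Rightarrow> 'a set) \<Rightarrow> 'w set \<Rightarrow> 'a dform \<Rightarrow> bool" where
  "supp V s (Atom p) = (\<forall>w\<in>s. p \<in> V w)"
| "supp V s (NegAtom p) = (\<forall>w\<in>s. p \<notin> V w)"
| "supp V s Bot = (s = {})"
| "supp V s (Dep ps q) =
     (\<forall>w\<in>s. \<forall>v\<in>s. (\<forall>r\<in>set ps. (r \<in> V w \<longleftrightarrow> r \<in> V v)) \<longrightarrow> (q \<in> V w \<longleftrightarrow> q \<in> V v))"
| "supp V s (Conj f g) = (supp V s f \<and> supp V s g)"
| "supp V s (Tensor f g) = (\<exists>t1 t2. s = t1 \<union> t2 \<and> supp V t1 f \<and> supp V t2 g)"

text \<open>Support of the inquisitive disjunction of two D formulas (not itself a D formula).\<close>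
definition supp_idisj :: "('w \<Rightarrow> 'a set) \<Rightarrow> 'w set \<Rightarrow> 'a dform \<Rightarrow> 'a dform \<Rightarrow> bool" where
  "supp_idisj V s f g = (supp V s f \<or> supp V s g)"

fun letters :: "'a dform \<Rightarrow> 'a set" where
  "letters (Atom p) = {p}"
| "letters (NegAtom p) = {p}"
| "letters Bot = {}"
| "letters (Dep ps q) = insert q (set ps)"
| "letters (Conj f g) = letters f \<union> letters g"
| "letters (Tensor f g) = letters f \<union> letters g"

fun bad_letters :: "'a dform \<Rightarrow> 'a set" where
  "bad_letters (Atom p) = {}"
| "bad_letters (NegAtom p) = {p}"
| "bad_letters Bot = {}"
| "bad_letters (Dep ps q) = insert q (set ps)"
| "bad_letters (Conj f g) = bad_letters f \<union> bad_letters g"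
| "bad_letters (Tensor f g) = bad_letters f \<union> bad_letters g"

definition is_context :: "'a \<Rightarrow> 'a \<Rightarrow> 'a dform \<Rightarrow> bool" where
  "is_context a b phi = (a \<noteq> b \<and> a \<notin> bad_letters phi \<and> b \<notin> bad_letters phi)"

fun subst2 :: "'a \<Rightarrow> 'a dform \<Rightarrow> 'a \<Rightarrow> 'a dform \<Rightarrow> 'a dform \<Rightarrow> 'a dform" where
  "subst2 a psi b chi (Atom p) = (if p = a then psi else if p = b then chi else Atom p)"
| "subst2 a psi b chi (NegAtom p) = NegAtom p"
| "subst2 a psi b chi Bot = Bot"
| "subst2 a psi b chi (Dep ps q) = Dep ps q"
| "subst2 a psi b chi (Conj f g) = Conj (subst2 a psi b chi f) (subst2 a psi b chi g)"
| "subst2 a psi b chi (Tensor f g) = Tensor (subst2 a psi b chi f) (subst2 a psi b chi g)"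

definition Wpq :: "nat set" where "Wpq = {1, 2, 3}"

definition Vpq :: "'a \<Rightarrow> 'a \<Rightarrow> nat \<Rightarrow> 'a set" where
  "Vpq p q w = (if w = 1 then {p} else if w = 2 then {p, q} else if w = 3 then {q} else {})"

end

theory Submission
  imports Defs
begin

definition inv6 :: "(nat \<Rightarrow> 'a set) \<Rightarrow> 'a dform \<Rightarrow> bool" where
  "inv6 V f = (supp V {} f \<and> ((\<forall>s. supp V s f \<longleftrightarrow> s = {}) \<or>
     ((\<forall>w\<in>{1::nat,2,3}. supp V {w} f) \<and> (supp V {1,2} f \<and> supp V {2,3} f \<longrightarrow> supp V {1,3} f))))"

lemma V1[simp]: "Vpq p q (Suc 0) = {p}" by (simp add: Vpq_def)
lemma V2[simp]: "Vpq p q 2 = {p,q}" by (simp add: Vpq_def)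
lemma V3[simp]: "Vpq p q 3 = {q}" by (simp add: Vpq_def)
lemma Vo: "w \<noteq> 1 \<Longrightarrow> w \<noteq> 2 \<Longrightarrow> w \<noteq> 3 \<Longrightarrow> Vpq p q w = {}" by (simp add: Vpq_def)

lemma Vnot: "r \<noteq> p \<Longrightarrow> r \<noteq> q \<Longrightarrow> r \<notin> Vpq p q w" by (simp add: Vpq_def)

lemma D12: "p \<noteq> q \<Longrightarrow> supp_idisj (Vpq p q) {1,2} (Dep [] p) (Dep [] q)"
  by (simp add: supp_idisj_def)
lemma D23: "p \<noteq> q \<Longrightarrow> supp_idisj (Vpq p q) {2,3} (Dep [] p) (Dep [] q)"
  by (simp add: supp_idisj_def)
lemma D13: "p \<noteq> q \<Longrightarrow> \<not> supp_idisj (Vpq p q) {1,3} (Dep [] p) (Dep [] q)"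
  by (auto simp add: supp_idisj_def)
lemma Wsub: "{1,2} \<subseteq> Wpq" "{2,3} \<subseteq> Wpq" "{1,3} \<subseteq> Wpq" by (auto simp: Wpq_def)

lemma supp_empty: "supp V {} f"
  by (induction f) auto

lemma inv_lemma:
  assumes "p \<noteq> q" "p \<notin> letters f" "q \<notin> letters f"
  shows "inv6 (Vpq p q) (subst2 a (Dep [] p) b (Dep [] q) f)"
  using assms
proof (induction f)
  case (Atom r)
  show ?case
  proof (cases "r = a")
    case True
    have "supp (Vpq p q) {1,2} (Dep [] p)" "\<not> supp (Vpq p q) {2,3} (Dep [] p)"
      "\<forall>w\<in>{1::nat,2,3}. supp (Vpq p q) {w} (Dep [] p)"
      using Atom.prems(1) by auto
    then show ?thesis using True by (simp add: inv6_def supp_empty)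
  next
    case False
    note F = False
    show ?thesis
    proof (cases "r = b")
      case True
      have "\<not> supp (Vpq p q) {1,2} (Dep [] q)"
        "\<forall>w\<in>{1::nat,2,3}. supp (Vpq p q) {w} (Dep [] q)"
        using Atom.prems(1) by auto
      then show ?thesis using True F by (simp add: inv6_def supp_empty)
    next
      case False
      have "\<forall>s. supp (Vpq p q) s (Atom r) \<longleftrightarrow> s = {}"
        using Atom.prems Vnot[of r p q] by auto
      then show ?thesis using F False by (simp add: inv6_def)
    qed
  qed
next
  case (NegAtom r)
  then have H: "\<forall>s. supp (Vpq p q) s (NegAtom r)" using Vnot[of r p q] by auto
  have "subst2 a (Dep [] p) b (Dep [] q) (NegAtom r) = NegAtom r" by simp
  then show ?case unfolding inv6_def using H by (simp only:) blast
next
  case Bot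
  then show ?case by (auto simp: inv6_def)
next
  case (Dep ps r)
  then have H: "\<forall>s. supp (Vpq p q) s (Dep ps r)" using Vnot[of r p q] by auto
  have "subst2 a (Dep [] p) b (Dep [] q) (Dep ps r) = Dep ps r" by simp
  then show ?case unfolding inv6_def using H by (simp only:) blast
next
  case (Conj f g)
  then have IF: "inv6 (Vpq p q) (subst2 a (Dep [] p) b (Dep [] q) f)"
    and IG: "inv6 (Vpq p q) (subst2 a (Dep [] p) b (Dep [] q) g)" by auto
  define F where "F = subst2 a (Dep [] p) b (Dep [] q) f"
  define G where "G = subst2 a (Dep [] p) b (Dep [] q) g"
  define V where "V = Vpq p q"
  have IF': "inv6 V F" and IG': "inv6 V G" using IF IG by (simp_all add: F_def G_def V_def)
  have eq: "subst2 a (Dep [] p) b (Dep [] q) (Conj f g) = Conj F G"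
    by (simp add: F_def G_def)
  have "inv6 V (Conj F G)"
  proof (cases "\<forall>s. supp V s F \<longleftrightarrow> s = {}")
    case True
    have "\<forall>s. supp V s (Conj F G) \<longleftrightarrow> s = {}" using True supp_empty by auto
    then show ?thesis unfolding inv6_def by simp
  next
    case False
    note F1 = False
    show ?thesis
    proof (cases "\<forall>s. supp V s G \<longleftrightarrow> s = {}")
      case True
      have "\<forall>s. supp V s (Conj F G) \<longleftrightarrow> s = {}" using True supp_empty by auto
      then show ?thesis unfolding inv6_def by simp
    next
      case False
      have sF: "(\<forall>w\<in>{1::nat,2,3}. supp V {w} F) \<and> (supp V {1,2} F \<and> supp V {2,3} F \<longrightarrow> supp V {1,3} F)"
        using IF' F1 unfolding inv6_def by blast
      have sG: "(\<forall>w\<in>{1::nat,2,3}. supp V {w} G) \<and> (supp V {1,2} G \<and> supp V {2,3} G \<longrightarrow> supp V {1,3} G)"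
        using IG' False unfolding inv6_def by blast
      show ?thesis using sF sG unfolding inv6_def by (simp add: supp_empty)
    qed
  qed
  then show ?case using eq V_def by simp
next
  case (Tensor f g)
  then have IF: "inv6 (Vpq p q) (subst2 a (Dep [] p) b (Dep [] q) f)"
    and IG: "inv6 (Vpq p q) (subst2 a (Dep [] p) b (Dep [] q) g)" by auto
  define F where "F = subst2 a (Dep [] p) b (Dep [] q) f"
  define G where "G = subst2 a (Dep [] p) b (Dep [] q) g"
  define V where "V = Vpq p q"
  have IF': "inv6 V F" and IG': "inv6 V G" using IF IG by (simp_all add: F_def G_def V_def)
  have eq: "subst2 a (Dep [] p) b (Dep [] q) (Tensor f g) = Tensor F G"
    by (simp add: F_def G_def)
  have "inv6 V (Tensor F G)"
  proof (cases "\<forall>s. supp V s F \<longleftrightarrow> s = {}")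
    case True
    have "\<forall>s. supp V s (Tensor F G) \<longleftrightarrow> supp V s G"
    proof (intro allI iffI)
      fix s assume "supp V s (Tensor F G)"
      then obtain t1 t2 where "s = t1 \<union> t2" "supp V t1 F" "supp V t2 G" by auto
      then show "supp V s G" using True by simp
    next
      fix s assume "supp V s G"
      then have "s = {} \<union> s \<and> supp V {} F \<and> supp V s G" by (simp add: supp_empty)
      then show "supp V s (Tensor F G)" by (simp only: supp.simps) blast
    qed
    then show ?thesis using IG' unfolding inv6_def by (simp add: supp_empty)
  next
    case False
    note F1 = False
    show ?thesis
    proof (cases "\<forall>s. supp V s G \<longleftrightarrow> s = {}")
      case True
      have "\<forall>s. supp V s (Tensor F G) \<longleftrightarrow> supp V s F"
      proof (intro allI iffI)
        fix s assume "supp V s (Tensor F G)"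
        then obtain t1 t2 where "s = t1 \<union> t2" "supp V t1 F" "supp V t2 G" by auto
        then show "supp V s F" using True by simp
      next
        fix s assume "supp V s F"
        then have "s = s \<union> {} \<and> supp V s F \<and> supp V {} G" by (simp add: supp_empty)
        then show "supp V s (Tensor F G)" by (simp only: supp.simps) blast
      qed
      then show ?thesis using IF' unfolding inv6_def by (simp add: supp_empty)
    next
      case False
      have sF: "\<forall>w\<in>{1::nat,2,3}. supp V {w} F" using IF' F1 unfolding inv6_def by blast
      have sG: "\<forall>w\<in>{1::nat,2,3}. supp V {w} G" using IG' False unfolding inv6_def by blast
      have e1: "supp V {} F" "supp V {} G" by (simp_all add: supp_empty)
      have "\<forall>w\<in>{1::nat,2,3}. supp V {w} (Tensor F G)"
      proof
        fix w :: nat assume "w \<in> {1,2,3}"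
        then have "{w} = {w} \<union> {} \<and> supp V {w} F \<and> supp V {} G" using sF e1 by auto
        then show "supp V {w} (Tensor F G)" by (simp only: supp.simps) blast
      qed
      moreover have "supp V {1,3} (Tensor F G)"
      proof -
        have "{1::nat,3} = {1} \<union> {3} \<and> supp V {1} F \<and> supp V {3} G" using sF sG by auto
        then show ?thesis by (simp only: supp.simps) blast
      qed
      ultimately show ?thesis unfolding inv6_def using supp_empty[of V "Tensor F G"] by blast
    qed
  qed
  then show ?case using eq V_def by simp
qed

theorem theorem6:
  fixes phi :: "'a dform" and a b p q :: 'a
  assumes "is_context a b phi"
    and "p \<noteq> q"
    and "p \<notin> letters phi" and "q \<notin> letters phi"
  shows "\<not> (\<forall>s \<subseteq> Wpq. supp (Vpq p q) s (subst2 a (Dep [] p) b (Dep [] q) phi)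
                          \<longleftrightarrow> supp_idisj (Vpq p q) s (Dep [] p) (Dep [] q))
         \<and> \<not> (\<forall>(W :: nat set) V. \<forall>s \<subseteq> W. supp V s (subst2 a (Dep [] p) b (Dep [] q) phi)
                          \<longleftrightarrow> supp_idisj V s (Dep [] p) (Dep [] q))"
proof -
  define F where "F = subst2 a (Dep [] p) b (Dep [] q) phi"
  have I: "inv6 (Vpq p q) F" unfolding F_def by (rule inv_lemma[OF assms(2-4)])
  have A: "\<not> (\<forall>s \<subseteq> Wpq. supp (Vpq p q) s F \<longleftrightarrow> supp_idisj (Vpq p q) s (Dep [] p) (Dep [] q))"
  proof
    assume H: "\<forall>s \<subseteq> Wpq. supp (Vpq p q) s F \<longleftrightarrow> supp_idisj (Vpq p q) s (Dep [] p) (Dep [] q)"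
    have "supp (Vpq p q) {1,2} F" using H Wsub(1) D12[OF assms(2)] by blast
    moreover have "supp (Vpq p q) {2,3} F" using H Wsub(2) D23[OF assms(2)] by blast
    moreover have "\<not> supp (Vpq p q) {1,3} F" using H Wsub(3) D13[OF assms(2)] by blast
    ultimately have c: "supp (Vpq p q) {1,2} F" "supp (Vpq p q) {2,3} F" "\<not> supp (Vpq p q) {1,3} F"
      by auto
    have ne: "{1::nat,2} \<noteq> {}" by simp
    have nb: "\<not> (\<forall>s. supp (Vpq p q) s F \<longleftrightarrow> s = {})"
    proof
      assume "\<forall>s. supp (Vpq p q) s F \<longleftrightarrow> s = {}"
      then have "supp (Vpq p q) {1,2} F \<longleftrightarrow> {1::nat,2} = {}" by (rule spec)
      then show False using c(1) ne by (rule_tac ne[THEN notE]) (rule iffD1)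
    qed
    have "supp (Vpq p q) {1,2} F \<and> supp (Vpq p q) {2,3} F \<longrightarrow> supp (Vpq p q) {1,3} F"
    proof -
      have "(\<forall>s. supp (Vpq p q) s F \<longleftrightarrow> s = {}) \<or> ((\<forall>w\<in>{1::nat,2,3}. supp (Vpq p q) {w} F) \<and> (supp (Vpq p q) {1,2} F \<and> supp (Vpq p q) {2,3} F \<longrightarrow> supp (Vpq p q) {1,3} F))"
        using I unfolding inv6_def by (rule conjunct2)
      then show ?thesis
      proof
        assume "\<forall>s. supp (Vpq p q) s F \<longleftrightarrow> s = {}"
        then show ?thesis using nb by (rule notE[rotated])
      next
        assume "(\<forall>w\<in>{1::nat,2,3}. supp (Vpq p q) {w} F) \<and> (supp (Vpq p q) {1,2} F \<and> supp (Vpq p q) {2,3} F \<longrightarrow> supp (Vpq p q) {1,3} F)"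
        then show ?thesis by (rule conjunct2)
      qed
    qed
    then show False using c by (elim impE) (rule conjI, assumption, assumption, erule notE, assumption)
  qed
  have B: "\<not> (\<forall>(W :: nat set) V. \<forall>s \<subseteq> W. supp V s F \<longleftrightarrow> supp_idisj V s (Dep [] p) (Dep [] q))"
  proof
    assume "\<forall>(W :: nat set) V. \<forall>s \<subseteq> W. supp V s F \<longleftrightarrow> supp_idisj V s (Dep [] p) (Dep [] q)"
    then have "\<forall>V. \<forall>s \<subseteq> Wpq. supp V s F \<longleftrightarrow> supp_idisj V s (Dep [] p) (Dep [] q)"
      by (rule spec)
    then have "\<forall>s \<subseteq> Wpq. supp (Vpq p q) s F \<longleftrightarrow> supp_idisj (Vpq p q) s (Dep [] p) (Dep [] q)"
      by (rule spec)
    then show False using A by (rule notE[rotated])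
  qed
  from A B show ?thesis unfolding F_def by (rule conjI)
qed

end
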